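(* Let $n\ge4$ and $\sigma=(\sigma_1,\dots,\sigma_{n-2})\in\Sigma_n$. Let $\mathbf A\in\mathcal G_n$ and let $x,y\in\mathcal G_n(\mathbf A,\mathbf C_n)$ with $x\ne y$. Then the following are equivalent: (1) $x^{-1}(\top)=y^{-1}(\top)$; (2) $\omega\circ x=\omega\circ y$; (3) there is a finite sequence $z_0=x,z_1,\dots,z_N=y$ of elements of $\mathcal G_n(\mathbf A,\mathbf C_n)$ such that for each $0\le j<N$ there is some $i_j\in\{1,\dots,n-3\}$ with $z_{j+1}=\sigma_{i_j}\circ z_j$ or $z_j=\sigma_{i_j}\circ z_{j+1}$.
   Context: $\mathbf C_n$ is the Heyting algebra whose universe is the chain $\{0<1<\dots<n-1\}$, with lattice operations min and max, $\bot=0$, $\top=n-1$, and $a\to b=\top$ if $a\le b$, $a\to b=b$ if $b<a$. $\mathcal G_n$ is the class of algebras isomorphic to subalgebras of direct powers of $\mathbf C_n$; $\mathcal G_n(\mathbf A,\mathbf C_n)$ is the set of Heyting homomorphisms $\mathbf A\to\mathbf C_n$; $\operatorname{ran}$ denotes image. $\mathbf 2$ is the two-element bounded lattice and $\omega\colon\mathbf C_n\to\{0,1\}$ is the bounded-lattice homomorphism with $\omega(\top)=1$, $\omega(k)=0$ for $k<\top$. For $n\ge4$: for $1\le i\le n-2$, $h_i$ is the endomorphism of $\mathbf C_n$ with $h_i(k)=k+1$ if $i\le k<n-1$ and $h_i(k)=k$ otherwise (so $\operatorname{ran}h_i=C_n\setminus\{i\}$). For $1\le i\le n-3$, $g_i$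 is the partial map with domain $C_n\setminus\{i\}$ given by $g_i(i+1)=i$ and $g_i(k)=k$ for $k\notin\{i,i+1\}$, and $f_i\colon C_n\setminus\{i+1\}\to C_n\setminus\{i\}$ is its inverse; these are partial endomorphisms (homomorphisms from a subalgebra of $\mathbf C_n$ into $\mathbf C_n$). $\Sigma_n=\{f_1,g_1\}\times\dots\times\{f_{n-3},g_{n-3}\}\times\{h_1,\dots,h_{n-2}\}$, whose elements are written $\sigma=(\sigma_1,\dots,\sigma_{n-2})$. For a homomorphism $z$ into $\mathbf C_n$ and a partial map $p$ on $C_n$, $p\circ z$ is defined exactly when $\operatorname{ran}z\subseteq\operatorname{dom}p$. *)

theory Defs
  imports Main "HOL-Library.FuncSet"
begin

record 'a halg =
  hcarrier :: "'a set"
  hmeet :: "'a \<Rightarrow> 'a \<Rightarrow> 'a"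
  hjoin :: "'a \<Rightarrow> 'a \<Rightarrow> 'a"
  himp  :: "'a \<Rightarrow> 'a \<Rightarrow> 'a"
  hbot  :: "'a"
  htop  :: "'a"

definition closed_alg :: "'a halg \<Rightarrow> bool" where
  "closed_alg A \<longleftrightarrow> hbot A \<in> hcarrier A \<and> htop A \<in> hcarrier A \<and>
     (\<forall>a\<in>hcarrier A. \<forall>b\<in>hcarrier A.
        hmeet A a b \<in> hcarrier A \<and> hjoin A a b \<in> hcarrier A \<and> himp A a b \<in> hcarrier A)"

definition hom :: "'a halg \<Rightarrow> 'b halg \<Rightarrow> ('a \<Rightarrow> 'b) \<Rightarrow> bool" where
  "hom A B h \<longleftrightarrow> h \<in> hcarrier A \<rightarrow> hcarrier B \<and>
     h (hbot A) = hbot B \<and> h (htop A) = htop B \<and>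
     (\<forall>a\<in>hcarrier A. \<forall>b\<in>hcarrier A.
        h (hmeet A a b) = hmeet B (h a) (h b) \<and>
        h (hjoin A a b) = hjoin B (h a) (h b) \<and>
        h (himp A a b) = himp B (h a) (h b))"

definition Cn :: "nat \<Rightarrow> nat halg" where
  "Cn n = \<lparr> hcarrier = {..<n}, hmeet = min, hjoin = max,
            himp = (\<lambda>a b. if a \<le> b then n - 1 else b),
            hbot = 0, htop = n - 1 \<rparr>"

definition Cn_power :: "nat \<Rightarrow> 'i set \<Rightarrow> ('i \<Rightarrow> nat) halg" where
  "Cn_power n I = \<lparr> hcarrier = I \<rightarrow>\<^sub>E {..<n},
      hmeet = (\<lambda>f g. \<lambda>i\<in>I. min (f i) (g i)),
      hjoin = (\<lambda>f g. \<lambda>i\<in>I. max (f i) (g i)),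
      himp = (\<lambda>f g. \<lambda>i\<in>I. himp (Cn n) (f i) (g i)),
      hbot = (\<lambda>i\<in>I. 0), htop = (\<lambda>i\<in>I. n - 1) \<rparr>"

text \<open>A belongs to G_n (witnessed by the index set I): A is an algebra isomorphic
  to a subalgebra of C_n^I, i.e. there is an injective homomorphism A -> C_n^I.\<close>
definition in_Gn :: "nat \<Rightarrow> 'i set \<Rightarrow> 'a halg \<Rightarrow> bool" where
  "in_Gn n I A \<longleftrightarrow> closed_alg A \<and>
     (\<exists>e. hom A (Cn_power n I) e \<and> inj_on e (hcarrier A))"

definition HomC :: "'a halg \<Rightarrow> nat \<Rightarrow> ('a \<Rightarrow> nat) set" where
  "HomC A n = {h. hom A (Cn n) h \<and> h \<in> extensional (hcarrier A)}"

definition omega :: "nat \<Rightarrow> nat \<Rightarrow> nat" where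
  "omega n k = (if k = n - 1 then 1 else 0)"

section \<open>Partial endomorphisms: (domain, map)\<close>

type_synonym pmap = "nat set \<times> (nat \<Rightarrow> nat)"

definition h_map :: "nat \<Rightarrow> nat \<Rightarrow> pmap" where
  "h_map n i = ({..<n}, \<lambda>k. if i \<le> k \<and> k < n - 1 then k + 1 else k)"

definition g_map :: "nat \<Rightarrow> nat \<Rightarrow> pmap" where
  "g_map n i = ({..<n} - {i}, \<lambda>k. if k = i + 1 then i else k)"

definition f_map :: "nat \<Rightarrow> nat \<Rightarrow> pmap" where
  "f_map n i = ({..<n} - {i + 1}, \<lambda>k. if k = i then i + 1 else k)"

definition Sigma_n :: "nat \<Rightarrow> (nat \<Rightarrow> pmap) set" where
  "Sigma_n n = {\<sigma>. (\<forall>i\<in>{1..n-3}. \<sigma> i = f_map n i \<or> \<sigma> i = g_map n i) \<and>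
                    (\<exists>i\<in>{1..n-2}. \<sigma> (n - 2) = h_map n i)}"

definition comp_eq :: "'a halg \<Rightarrow> pmap \<Rightarrow> ('a \<Rightarrow> nat) \<Rightarrow> ('a \<Rightarrow> nat) \<Rightarrow> bool" where
  "comp_eq A p u v \<longleftrightarrow> u ` hcarrier A \<subseteq> fst p \<and> (\<forall>a\<in>hcarrier A. v a = snd p (u a))"

end

theory Submission imports Defs begin

lemma HomC_D:
  assumes "u \<in> HomC A n"
  shows "\<And>a. a \<in> hcarrier A \<Longrightarrow> u a < n"
    and "u (hbot A) = 0" and "u (htop A) = n - 1"
    and "\<And>a b. a \<in> hcarrier A \<Longrightarrow> b \<in> hcarrier A \<Longrightarrow> u (hmeet A a b) = min (u a) (u b)"
    and "\<And>a b. a \<in> hcarrier A \<Longrightarrow> b \<in> hcarrier A \<Longrightarrow> u (hjoin A a b) = max (u a) (u b)"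
    and "\<And>a b. a \<in> hcarrier A \<Longrightarrow> b \<in> hcarrier A \<Longrightarrow> u (himp A a b) = (if u a \<le> u b then n - 1 else u b)"
    and "u \<in> extensional (hcarrier A)"
  using assms by (auto simp: HomC_def hom_def Cn_def Pi_def)

lemma HomC_I:
  assumes "closed_alg A"
    and "\<And>a. a \<in> hcarrier A \<Longrightarrow> u a < n"
    and "u (hbot A) = 0" and "u (htop A) = n - 1"
    and "\<And>a b. a \<in> hcarrier A \<Longrightarrow> b \<in> hcarrier A \<Longrightarrow> u (hmeet A a b) = min (u a) (u b)"
    and "\<And>a b. a \<in> hcarrier A \<Longrightarrow> b \<in> hcarrier A \<Longrightarrow> u (hjoin A a b) = max (u a) (u b)"
    and "\<And>a b. a \<in> hcarrier A \<Longrightarrow> b \<in> hcarrier A \<Longrightarrow> u (himp A a b) = (if u a \<le> u b then n - 1 else u b)"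
    and "u \<in> extensional (hcarrier A)"
  shows "u \<in> HomC A n"
  using assms by (auto simp: HomC_def hom_def Cn_def Pi_def)

lemma hom_comp:
  assumes cl: "closed_alg A" and u: "u \<in> HomC A n"
    and mono: "\<And>s t. s \<in> u ` hcarrier A \<Longrightarrow> t \<in> u ` hcarrier A \<Longrightarrow> s < t \<Longrightarrow> \<psi> s < \<psi> t"
    and p0: "\<psi> 0 = 0" and p1: "\<psi> (n - 1) = n - 1"
    and pn: "\<And>s. s \<in> u ` hcarrier A \<Longrightarrow> \<psi> s < n"
  shows "(\<lambda>a\<in>hcarrier A. \<psi> (u a)) \<in> HomC A n"
proof -
  have le: "u a \<le> u b \<longleftrightarrow> \<psi> (u a) \<le> \<psi> (u b)" if "a \<in> hcarrier A" "b \<in> hcarrier A" for a b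
    using mono[of "u a" "u b"] mono[of "u b" "u a"] that
    by (metis image_eqI le_less not_less)
  have cb: "hbot A \<in> hcarrier A" "htop A \<in> hcarrier A" 
    and co: "\<And>a b. a \<in> hcarrier A \<Longrightarrow> b \<in> hcarrier A \<Longrightarrow> hmeet A a b \<in> hcarrier A \<and> hjoin A a b \<in> hcarrier A \<and> himp A a b \<in> hcarrier A"
    using cl by (auto simp: closed_alg_def)
  let ?w = "(\<lambda>a\<in>hcarrier A. \<psi> (u a))"
  have r: "\<And>c. c \<in> hcarrier A \<Longrightarrow> ?w c = \<psi> (u c)" by simp
  show ?thesis
  proof (rule HomC_I[OF cl])
    fix a b assume a: "a \<in> hcarrier A" and b: "b \<in> hcarrier A"
    have e: "?w (hmeet A a b) = \<psi> (u (hmeet A a b))" "?w (hjoin A a b) = \<psi> (u (hjoin A a b))"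
        "?w (himp A a b) = \<psi> (u (himp A a b))"
      using co[OF a b] by auto
    show "?w (hmeet A a b) = min (?w a) (?w b)"
      unfolding e r[OF a] r[OF b] HomC_D(4)[OF u a b]
      using le[OF a b] le[OF b a] by (cases "u a \<le> u b") (simp_all add: min_def)
    show "?w (hjoin A a b) = max (?w a) (?w b)"
      unfolding e r[OF a] r[OF b] HomC_D(5)[OF u a b]
      using le[OF a b] le[OF b a] by (cases "u a \<le> u b") (simp_all add: max_def)
    show "?w (himp A a b) = (if ?w a \<le> ?w b then n - 1 else ?w b)"
      unfolding e r[OF a] r[OF b] HomC_D(6)[OF u a b]
      using le[OF a b] p1 by (cases "u a \<le> u b") simp_all
  next
    fix a assume "a \<in> hcarrier A" thus "?w a < n" using pn by auto
  next
    show "?w (hbot A) = 0" using cb p0 HomC_D(2)[OF u] by simp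
    show "?w (htop A) = n - 1" using cb p1 HomC_D(3)[OF u] by simp
    show "?w \<in> extensional (hcarrier A)" by simp
  qed
qed

lemma top_step:
  assumes "comp_eq A p u v" "p = f_map n i \<or> p = g_map n i" "1 \<le> i" "i \<le> n - 3" "n \<ge> 4"
    "u \<in> HomC A n" "a \<in> hcarrier A"
  shows "v a = n - 1 \<longleftrightarrow> u a = n - 1"
  using assms HomC_D(1)[OF assms(6,7)]
  by (auto simp: comp_eq_def f_map_def g_map_def split: if_splits)

lemma preorder:
  assumes cl: "closed_alg A" and u: "u \<in> HomC A n" and v: "v \<in> HomC A n"
    and top: "\<And>a. a \<in> hcarrier A \<Longrightarrow> u a = n - 1 \<longleftrightarrow> v a = n - 1"
    and a: "a \<in> hcarrier A" and b: "b \<in> hcarrier A" and le: "u a \<le> u b"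
  shows "v a \<le> v b"
proof -
  have i: "himp A a b \<in> hcarrier A" using cl a b by (auto simp: closed_alg_def)
  have "u (himp A a b) = n - 1" using HomC_D(6)[OF u a b] le by simp
  hence "v (himp A a b) = n - 1" using top i by simp
  thus ?thesis using HomC_D(6)[OF v a b] HomC_D(1)[OF v a] by (auto split: if_splits)
qed

definition dc :: "'a halg \<Rightarrow> nat \<Rightarrow> ('a \<Rightarrow> nat) \<Rightarrow> bool" where
  "dc A n u \<longleftrightarrow> (\<forall>a\<in>hcarrier A. u a < n - 1 \<longrightarrow> (\<forall>t<u a. \<exists>b\<in>hcarrier A. u b = t))"

lemma dc_help:
  assumes top0: "\<forall>a\<in>hcarrier A. u a = n - 1 \<longleftrightarrow> v a = n - 1"
    and ord0: "\<forall>a\<in>hcarrier A. \<forall>b\<in>hcarrier A. u a \<le> u b \<longleftrightarrow> v a \<le> v b"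
    and dcu: "dc A n u" and dcv: "dc A n v"
    and un0: "\<forall>a\<in>hcarrier A. u a < n"
    and vn0: "\<forall>a\<in>hcarrier A. v a < n"
    and IH0: "\<forall>j<k. \<forall>b\<in>hcarrier A. (u b = j \<longrightarrow> v b = j) \<and> (v b = j \<longrightarrow> u b = j)"
    and a: "a \<in> hcarrier A" and ua: "u a = k"
  shows "v a = k"
proof -
  have top: "\<And>a. a \<in> hcarrier A \<Longrightarrow> u a = n - 1 \<longleftrightarrow> v a = n - 1" using top0 by blast
  have ord: "\<And>a b. a \<in> hcarrier A \<Longrightarrow> b \<in> hcarrier A \<Longrightarrow> u a \<le> u b \<longleftrightarrow> v a \<le> v b" using ord0 by blast
  have un: "\<And>a. a \<in> hcarrier A \<Longrightarrow> u a < n" using un0 by blast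
  have vn: "\<And>a. a \<in> hcarrier A \<Longrightarrow> v a < n" using vn0 by blast
  have IH: "\<And>j b. j < k \<Longrightarrow> b \<in> hcarrier A \<Longrightarrow> (u b = j \<longrightarrow> v b = j) \<and> (v b = j \<longrightarrow> u b = j)" using IH0 by blast
  show ?thesis
proof (cases "k = n - 1")
  case True thus ?thesis using top a ua by simp
next
  case False
  hence kl: "u a < n - 1" "v a \<noteq> n - 1" using top[OF a] ua vn[OF a] un[OF a] by auto
  have ge: "v a \<ge> k"
  proof (rule ccontr)
    assume "\<not> k \<le> v a"
    hence "k > 0" "k - 1 < u a" using ua by auto
    then obtain b where b: "b \<in> hcarrier A" "u b = k - 1" using dcu kl a unfolding dc_def by blast
    hence "v b = k - 1" using IH[of "k - 1" b] \<open>k > 0\<close> by auto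
    moreover have "\<not> v a \<le> v b" using ord[OF a b(1)] b ua \<open>k > 0\<close> by auto
    ultimately show False using \<open>\<not> k \<le> v a\<close> by auto
  qed
  show ?thesis
  proof (rule ccontr)
    assume "v a \<noteq> k"
    hence "k < v a" using ge by auto
    moreover have "v a < n - 1" using kl vn[OF a] by auto
    ultimately obtain b where b: "b \<in> hcarrier A" "v b = k" using dcv a unfolding dc_def by blast
    have "\<not> u a \<le> u b" using ord[OF a b(1)] b \<open>k < v a\<close> by auto
    hence "u b < k" using ua by auto
    hence "v b = u b" using IH[of "u b" b] b by auto
    thus False using b \<open>u b < k\<close> by auto
  qed
qed
qed

lemma dc_unique:
  assumes top: "\<forall>a\<in>hcarrier A. u a = n - 1 \<longleftrightarrow> v a = n - 1"
    and ord: "\<forall>a\<in>hcarrier A. \<forall>b\<in>hcarrier A. u a \<le> u b \<longleftrightarrow> v a \<le> v b"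
    and dcu: "dc A n u" and dcv: "dc A n v"
    and un: "\<forall>a\<in>hcarrier A. u a < n"
    and vn: "\<forall>a\<in>hcarrier A. v a < n"
  shows "\<forall>a\<in>hcarrier A. u a = v a"
proof -
  have top': "\<forall>a\<in>hcarrier A. v a = n - 1 \<longleftrightarrow> u a = n - 1" using top by blast
  have ord': "\<forall>a\<in>hcarrier A. \<forall>b\<in>hcarrier A. v a \<le> v b \<longleftrightarrow> u a \<le> u b" using ord by blast
  have "\<forall>b\<in>hcarrier A. (u b = k \<longrightarrow> v b = k) \<and> (v b = k \<longrightarrow> u b = k)" for k
  proof (induction k rule: less_induct)
    case (less k)
    have IH: "\<forall>j<k. \<forall>b\<in>hcarrier A. (u b = j \<longrightarrow> v b = j) \<and> (v b = j \<longrightarrow> u b = j)"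
      using less.IH by blast
    have IH': "\<forall>j<k. \<forall>b\<in>hcarrier A. (v b = j \<longrightarrow> u b = j) \<and> (u b = j \<longrightarrow> v b = j)"
      using IH by blast
    have c1: "\<forall>b\<in>hcarrier A. u b = k \<longrightarrow> v b = k"
      using dc_help[OF top ord dcu dcv un vn IH] by blast
    have c2: "\<forall>b\<in>hcarrier A. v b = k \<longrightarrow> u b = k"
      using dc_help[OF top' ord' dcv dcu vn un IH'] by blast
    show ?case using c1 c2 by blast
  qed
  thus ?thesis by blast
qed

definition Rel :: "'a halg \<Rightarrow> nat \<Rightarrow> (nat \<Rightarrow> pmap) \<Rightarrow> ('a \<Rightarrow> nat) \<Rightarrow> ('a \<Rightarrow> nat) \<Rightarrow> bool" where
  "Rel A n \<sigma> u v \<longleftrightarrow> u \<in> HomC A n \<and> v \<in> HomC A n \<and>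
     (\<exists>i\<in>{1..n-3}. comp_eq A (\<sigma> i) u v \<or> comp_eq A (\<sigma> i) v u)"

lemma Rel_sym: "Rel A n \<sigma> u v \<Longrightarrow> Rel A n \<sigma> v u"
  unfolding Rel_def by blast

lemma Rel_star_sym: "(Rel A n \<sigma>)\<^sup>*\<^sup>* u v \<Longrightarrow> (Rel A n \<sigma>)\<^sup>*\<^sup>* v u"
proof (induction rule: rtranclp_induct)
  case base thus ?case by simp
next
  case (step b c) thus ?case using Rel_sym converse_rtranclp_into_rtranclp by metis
qed

lemma Rel_star_top:
  assumes "(Rel A n \<sigma>)\<^sup>*\<^sup>* u v" "\<sigma> \<in> Sigma_n n" "n \<ge> 4" "a \<in> hcarrier A"
  shows "v a = n - 1 \<longleftrightarrow> u a = n - 1"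
  using assms(1)
proof (induction rule: rtranclp_induct)
  case base thus ?case by simp
next
  case (step b c)
  then obtain i where i: "i \<in> {1..n-3}" "comp_eq A (\<sigma> i) b c \<or> comp_eq A (\<sigma> i) c b"
    and hb: "b \<in> HomC A n" and hc: "c \<in> HomC A n" unfolding Rel_def by blast
  have s: "\<sigma> i = f_map n i \<or> \<sigma> i = g_map n i" using assms(2) i(1) unfolding Sigma_n_def by blast
  have "c a = n - 1 \<longleftrightarrow> b a = n - 1"
    using i(2) top_step[OF _ s _ _ assms(3) hb assms(4)] top_step[OF _ s _ _ assms(3) hc assms(4)] i(1)
    by auto
  thus ?case using step.IH by simp
qed

lemma push_down:
  assumes cl: "closed_alg A" and sig: "\<sigma> \<in> Sigma_n n" and n4: "n \<ge> 4"
  shows "x \<in> HomC A n \<Longrightarrow> \<exists>c. (Rel A n \<sigma>)\<^sup>*\<^sup>* x c \<and> c \<in> HomC A n \<and> dc A n c"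
proof (induction "sum id (x ` hcarrier A)" arbitrary: x rule: less_induct)
  case less
  note x = less.prems
  show ?case
  proof (cases "dc A n x")
    case True thus ?thesis using x by blast
  next
    case False
    then obtain a t where a: "a \<in> hcarrier A" "x a < n - 1" and t: "t < x a" "t \<notin> x ` hcarrier A"
      unfolding dc_def by blast
    let ?S = "x ` hcarrier A"
    have cb: "hbot A \<in> hcarrier A" "htop A \<in> hcarrier A" using cl by (auto simp: closed_alg_def)
    have z: "0 \<in> ?S" using cb HomC_D(2)[OF x] by force
    have tp: "n - 1 \<in> ?S" using cb HomC_D(3)[OF x] by force
    define s where "s = (LEAST s. s \<in> ?S \<and> t < s)"
    have ex: "x a \<in> ?S \<and> t < x a" using a t by auto
    have s1: "s \<in> ?S" "t < s" using LeastI[of "\<lambda>s. s \<in> ?S \<and> t < s", OF ex] unfolding s_def by auto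
    have s2: "s \<le> x a" using Least_le[of "\<lambda>s. s \<in> ?S \<and> t < s", OF ex] unfolding s_def by auto
    have t1: "t \<ge> 1" using t z by (cases t) auto
    have sm: "s - 1 \<notin> ?S"
    proof
      assume h: "s - 1 \<in> ?S"
      show False
      proof (cases "s - 1 = t")
        case True thus False using h t by simp
      next
        case False
        hence "t < s - 1" using s1 by auto
        hence "s \<le> s - 1" using Least_le[of "\<lambda>s. s \<in> ?S \<and> t < s" "s - 1"] h unfolding s_def by auto
        thus False using s1 by auto
      qed
    qed
    have sm': "\<And>c. c \<in> hcarrier A \<Longrightarrow> x c \<noteq> s - 1" using sm by (metis image_eqI)
    define i where "i = s - 1"
    have s3: "2 \<le> s" using s1(2) t1 by linarith
    have s4: "s < n - 1" using s2 a(2) by linarith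
    have i: "i \<in> {1..n-3}" "s = i + 1"
    proof -
      show "s = i + 1" unfolding i_def using s3 by arith
      have "1 \<le> i" unfolding i_def using s3 by arith
      moreover have "i \<le> n - 3" unfolding i_def using s4 by arith
      ultimately show "i \<in> {1..n-3}" by simp
    qed
    define \<psi> where "\<psi> = (\<lambda>k::nat. if k = s then s - 1 else k)"
    have mono: "\<psi> k < \<psi> l" if "k \<in> ?S" "l \<in> ?S" "k < l" for k l
    proof (cases "l = s")
      case True
      have "k \<noteq> s - 1" using that(1) sm by metis
      hence "k < s - 1" using True that(3) by arith
      thus ?thesis using True that(3) unfolding \<psi>_def by simp
    next
      case False
      thus ?thesis using that(3) s3 unfolding \<psi>_def by auto
    qed
    have xn: "\<And>k. k \<in> ?S \<Longrightarrow> k < n" using HomC_D(1)[OF x] by auto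
    define x' where "x' = (\<lambda>a\<in>hcarrier A. \<psi> (x a))"
    have x': "x' \<in> HomC A n" unfolding x'_def
      by (rule hom_comp[OF cl x mono]) (use i xn in \<open>auto simp: \<psi>_def\<close>)
    have xv: "\<And>c. c \<in> hcarrier A \<Longrightarrow> x' c = \<psi> (x c)" unfolding x'_def by simp
    have rel: "Rel A n \<sigma> x x'"
    proof -
      have "\<sigma> i = f_map n i \<or> \<sigma> i = g_map n i" using sig i(1) unfolding Sigma_n_def by blast
      moreover have "comp_eq A (g_map n i) x x'"
        unfolding comp_eq_def g_map_def using xn sm' i xv unfolding \<psi>_def i_def by auto
      moreover have "comp_eq A (f_map n i) x' x"
        unfolding comp_eq_def f_map_def using xn sm' i xv unfolding \<psi>_def i_def by fastforce
      ultimately have "comp_eq A (\<sigma> i) x x' \<or> comp_eq A (\<sigma> i) x' x" by auto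
      thus ?thesis unfolding Rel_def using x x' i(1) by blast
    qed
    have img: "x' ` hcarrier A = \<psi> ` ?S" using xv by (auto simp: image_image)
    have inj: "inj_on \<psi> ?S" using mono by (metis linorder_inj_onI' less_irrefl) 
    have fin: "finite ?S" using xn by (meson finite_lessThan finite_subset lessThan_iff subsetI)
    have "sum id (x' ` hcarrier A) = sum \<psi> ?S" using img sum.reindex[OF inj] by simp
    also have "\<dots> < sum id ?S"
      by (rule sum_strict_mono_ex1[OF fin]) (use s1 i in \<open>auto simp: \<psi>_def\<close>)
    finally obtain c where "(Rel A n \<sigma>)\<^sup>*\<^sup>* x' c" "c \<in> HomC A n" "dc A n c"
      using less.hyps[OF _ x'] by blast
    thus ?thesis using rel converse_rtranclp_into_rtranclp by metis
  qed
qed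


lemma Rel_chain:
  assumes "(Rel A n \<sigma>)\<^sup>*\<^sup>* x y" "x \<in> HomC A n"
  shows "\<exists>N z. z 0 = x \<and> z N = y \<and> (\<forall>j\<le>N. z j \<in> HomC A n) \<and>
                 (\<forall>j<N. \<exists>i\<in>{1..n-3}. comp_eq A (\<sigma> i) (z j) (z (Suc j))
                                      \<or> comp_eq A (\<sigma> i) (z (Suc j)) (z j))"
  using assms(1)
proof (induction rule: rtranclp_induct)
  case base show ?case by (rule exI[of _ 0], rule exI[of _ "\<lambda>_. x"]) (use assms(2) in auto)
next
  case (step u v)
  then obtain N z where z: "z 0 = x" "z N = u" "\<forall>j\<le>N. z j \<in> HomC A n"
    "\<forall>j<N. \<exists>i\<in>{1..n-3}. comp_eq A (\<sigma> i) (z j) (z (Suc j)) \<or> comp_eq A (\<sigma> i) (z (Suc j)) (z j)"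
    by blast
  have R: "v \<in> HomC A n" "\<exists>i\<in>{1..n-3}. comp_eq A (\<sigma> i) u v \<or> comp_eq A (\<sigma> i) v u"
    using step.hyps(2) unfolding Rel_def by auto
  define z' where "z' = z(Suc N := v)"
  have "z' 0 = x" "z' (Suc N) = v" using z unfolding z'_def by auto
  moreover have "\<forall>j\<le>Suc N. z' j \<in> HomC A n" using z R unfolding z'_def by (auto simp: le_Suc_eq)
  moreover have "\<forall>j<Suc N. \<exists>i\<in>{1..n-3}. comp_eq A (\<sigma> i) (z' j) (z' (Suc j)) \<or> comp_eq A (\<sigma> i) (z' (Suc j)) (z' j)"
  proof (intro allI impI)
    fix j assume "j < Suc N"
    thus "\<exists>i\<in>{1..n-3}. comp_eq A (\<sigma> i) (z' j) (z' (Suc j)) \<or> comp_eq A (\<sigma> i) (z' (Suc j)) (z' j)"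
      using z(2,4) R(2) unfolding z'_def by (cases "j = N") auto
  qed
  ultimately show ?case by blast
qed

theorem lemma2p3:
  fixes n :: nat and \<sigma> :: "nat \<Rightarrow> pmap" and A :: "'a halg" and I :: "'i set"
    and x y :: "'a \<Rightarrow> nat"
  assumes "n \<ge> 4" and "\<sigma> \<in> Sigma_n n" and "in_Gn n I A"
    and "x \<in> HomC A n" and "y \<in> HomC A n" and "x \<noteq> y"
  shows "({a\<in>hcarrier A. x a = n - 1} = {a\<in>hcarrier A. y a = n - 1}
           \<longleftrightarrow> (\<forall>a\<in>hcarrier A. omega n (x a) = omega n (y a)))
       \<and> ((\<forall>a\<in>hcarrier A. omega n (x a) = omega n (y a))
           \<longleftrightarrow> (\<exists>N z. z 0 = x \<and> z N = y \<and> (\<forall>j\<le>N. z j \<in> HomC A n) \<and>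
                 (\<forall>j<N. \<exists>i\<in>{1..n-3}. comp_eq A (\<sigma> i) (z j) (z (Suc j))
                                      \<or> comp_eq A (\<sigma> i) (z (Suc j)) (z j))))"
proof -
  have cl: "closed_alg A" using assms(3) unfolding in_Gn_def by blast
  have om: "(\<forall>a\<in>hcarrier A. omega n (x a) = omega n (y a)) \<longleftrightarrow> (\<forall>a\<in>hcarrier A. x a = n - 1 \<longleftrightarrow> y a = n - 1)"
    unfolding omega_def by auto
  have p1: "({a\<in>hcarrier A. x a = n - 1} = {a\<in>hcarrier A. y a = n - 1})
           \<longleftrightarrow> (\<forall>a\<in>hcarrier A. x a = n - 1 \<longleftrightarrow> y a = n - 1)" by blast
  have p2: "(\<forall>a\<in>hcarrier A. x a = n - 1 \<longleftrightarrow> y a = n - 1) \<longleftrightarrow> (\<exists>N z. z 0 = x \<and> z N = y \<and> (\<forall>j\<le>N. z j \<in> HomC A n) \<and>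
                 (\<forall>j<N. \<exists>i\<in>{1..n-3}. comp_eq A (\<sigma> i) (z j) (z (Suc j))
                                      \<or> comp_eq A (\<sigma> i) (z (Suc j)) (z j)))"
  proof
    assume top: "\<forall>a\<in>hcarrier A. x a = n - 1 \<longleftrightarrow> y a = n - 1"
    obtain cx where cx: "(Rel A n \<sigma>)\<^sup>*\<^sup>* x cx" "cx \<in> HomC A n" "dc A n cx"
      using push_down[OF cl assms(2,1) assms(4)] by blast
    obtain cy where cy: "(Rel A n \<sigma>)\<^sup>*\<^sup>* y cy" "cy \<in> HomC A n" "dc A n cy"
      using push_down[OF cl assms(2,1) assms(5)] by blast
    have tc: "cx a = n - 1 \<longleftrightarrow> cy a = n - 1" if "a \<in> hcarrier A" for a
      using Rel_star_top[OF cx(1) assms(2,1) that] Rel_star_top[OF cy(1) assms(2,1) that] top that by blast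
    have ord: "cx a \<le> cx b \<longleftrightarrow> cy a \<le> cy b" if "a \<in> hcarrier A" "b \<in> hcarrier A" for a b
      using preorder[OF cl cx(2) cy(2) tc that] preorder[OF cl cy(2) cx(2) tc[symmetric] that] by blast
    have "\<forall>a\<in>hcarrier A. cx a = cy a"
      by (rule dc_unique) (use tc ord cx(3) cy(3) HomC_D(1)[OF cx(2)] HomC_D(1)[OF cy(2)] in auto)
    hence "cx = cy" using HomC_D(7)[OF cx(2)] HomC_D(7)[OF cy(2)] by (metis extensionalityI)
    hence "(Rel A n \<sigma>)\<^sup>*\<^sup>* x y" using cx(1) Rel_star_sym[OF cy(1)] by (metis rtranclp_trans)
    thus "\<exists>N z. z 0 = x \<and> z N = y \<and> (\<forall>j\<le>N. z j \<in> HomC A n) \<and>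
                 (\<forall>j<N. \<exists>i\<in>{1..n-3}. comp_eq A (\<sigma> i) (z j) (z (Suc j))
                                      \<or> comp_eq A (\<sigma> i) (z (Suc j)) (z j))"
      by (rule Rel_chain[OF _ assms(4)])
  next
    assume "\<exists>N z. z 0 = x \<and> z N = y \<and> (\<forall>j\<le>N. z j \<in> HomC A n) \<and>
                 (\<forall>j<N. \<exists>i\<in>{1..n-3}. comp_eq A (\<sigma> i) (z j) (z (Suc j))
                                      \<or> comp_eq A (\<sigma> i) (z (Suc j)) (z j))"
    then obtain N z where z: "z 0 = x" "z N = y" "\<forall>j\<le>N. z j \<in> HomC A n"
      "\<forall>j<N. \<exists>i\<in>{1..n-3}. comp_eq A (\<sigma> i) (z j) (z (Suc j)) \<or> comp_eq A (\<sigma> i) (z (Suc j)) (z j)"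
      by blast
    have "j \<le> N \<Longrightarrow> (Rel A n \<sigma>)\<^sup>*\<^sup>* x (z j)" for j
    proof (induction j)
      case 0 thus ?case using z(1) by simp
    next
      case (Suc j)
      hence "Rel A n \<sigma> (z j) (z (Suc j))" using z(3,4) unfolding Rel_def by auto
      thus ?case using Suc by (meson Suc_leD rtranclp.rtrancl_into_rtrancl)
    qed
    hence xy: "(Rel A n \<sigma>)\<^sup>*\<^sup>* x y" using z(2) by blast
    show "\<forall>a\<in>hcarrier A. x a = n - 1 \<longleftrightarrow> y a = n - 1"
    proof
      fix a assume "a \<in> hcarrier A"
      from Rel_star_top[OF xy assms(2,1) this] show "x a = n - 1 \<longleftrightarrow> y a = n - 1" by simp
    qed
  qed
  show ?thesis by (intro conjI) (rule trans[OF p1 om[symmetric]], rule trans[OF om p2])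
qed

end
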